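(* Let $c_1\ge\dots\ge c_m\ge0$ and $d_1\ge\dots\ge d_m\ge0$ be integers with $(c_1,\dots,c_m)\ne(d_1,\dots,d_m)$, and set $c_0=d_0=+\infty$. Let $\ell=\max\{i: c_i\ne d_i\}$, $f=\max\{i\in\{1,\dots,\ell\}: c_i<d_{i-1}\}$, $f'=\max\{i\in\{1,\dots,\ell\}: d_i<c_{i-1}\}$. Let $(r_1,r_2,\dots)$ and $(s_1,s_2,\dots)$ be the conjugate partitions of $(c_1,\dots,c_m)$ and $(d_1,\dots,d_m)$, $r_0=s_0=m$, $x=\min\{i: r_i\ne s_i\}$, $e=\min\{i\ge x-1: s_{i+1}\ge r_{i+1}\}$ and $e'=\min\{i\ge x-1: r_{i+1}\ge s_{i+1}\}$. Then $e=c_f$ and $e'=d_{f'}$.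
   Context: The conjugate of a finite nonincreasing sequence $(a_1,\dots,a_n)$ of nonnegative integers is $(\bar a_1,\bar a_2,\dots)$ with $\bar a_k=\#\{i: a_i\ge k\}$, $k\ge1$. *)

theory Defs
  imports Main "HOL-Library.Extended_Nat"
begin

text \<open>A sequence (a_1,...,a_m) is represented by a function a :: nat => nat,
  only the values at indices 1..m being relevant.\<close>

text \<open>Conjugate: conjugate m a k = #{i in {1..m}. a_i >= k}.  For k >= 1 this is the
  paper's conjugate; for k = 0 it equals m, matching the convention r_0 = m.\<close>
definition conjugate :: "nat \<Rightarrow> (nat \<Rightarrow> nat) \<Rightarrow> nat \<Rightarrow> nat" where
  "conjugate m a k = card {i \<in> {1..m}. k \<le> a i}"

definition ext0 :: "(nat \<Rightarrow> nat) \<Rightarrow> nat \<Rightarrow> enat" where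
  "ext0 a i = (if i = 0 then \<infinity> else enat (a i))"

end

theory Submission
  imports Defs
begin

lemma mono_seq:
  assumes "\<And>i. 1 \<le> i \<Longrightarrow> i < m \<Longrightarrow> a (Suc i) \<le> (a i :: nat)"
  shows "1 \<le> i \<Longrightarrow> i \<le> j \<Longrightarrow> j \<le> m \<Longrightarrow> a j \<le> a i"
proof (induction j)
  case 0 then show ?case by simp
next
  case (Suc j)
  show ?case
  proof (cases "i = Suc j")
    case True then show ?thesis by simp
  next
    case False
    then have "i \<le> j" using Suc by simp
    then have "a j \<le> a i" using Suc by simp
    moreover have "a (Suc j) \<le> a j" using assms[of j] Suc \<open>i \<le> j\<close> by simp
    ultimately show ?thesis by simp
  qed
qed

lemma cardA:
  assumes "j \<le> m" "\<And>i. 1 \<le> i \<Longrightarrow> i \<le> j \<Longrightarrow> k \<le> a i"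
  shows "j \<le> conjugate m a k"
proof -
  have "{1..j} \<subseteq> {i \<in> {1..m}. k \<le> a i}" using assms by auto
  then have "card {1..j} \<le> card {i \<in> {1..m}. k \<le> a i}" by (intro card_mono) auto
  then show ?thesis by (simp add: conjugate_def)
qed

lemma cardB:
  assumes "\<And>i. 1 \<le> i \<Longrightarrow> i < m \<Longrightarrow> a (Suc i) \<le> (a i :: nat)"
    and "1 \<le> j" "j \<le> m" "a j < k"
  shows "conjugate m a k \<le> j - 1"
proof -
  have "{i \<in> {1..m}. k \<le> a i} \<subseteq> {1..j-1}"
  proof
    fix i assume i: "i \<in> {i \<in> {1..m}. k \<le> a i}"
    show "i \<in> {1..j-1}"
    proof (rule ccontr)
      assume "i \<notin> {1..j-1}"
      then have "j \<le> i" using i by auto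
      then have "a i \<le> a j" using mono_seq[where m=m and a=a and i=j and j=i] assms i by auto
      then show False using i assms by auto
    qed
  qed
  then have "card {i \<in> {1..m}. k \<le> a i} \<le> card {1..j-1}" by (intro card_mono) auto
  then show ?thesis by (simp add: conjugate_def)
qed

lemma half:
  fixes m :: nat and c d :: "nat \<Rightarrow> nat" and l f x e :: nat
  assumes c_mono: "\<And>i. 1 \<le> i \<Longrightarrow> i < m \<Longrightarrow> c (Suc i) \<le> c i"
    and d_mono: "\<And>i. 1 \<le> i \<Longrightarrow> i < m \<Longrightarrow> d (Suc i) \<le> d i"
    and neq: "\<exists>i \<in> {1..m}. c i \<noteq> d i"
    and l_def: "l = Max {i \<in> {1..m}. c i \<noteq> d i}"
    and f_def: "f = Max {i \<in> {1..l}. enat (c i) < ext0 d (i - 1)}"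
    and x_def: "x = (LEAST i. conjugate m c i \<noteq> conjugate m d i)"
    and e_def: "e = (LEAST i. x - 1 \<le> i \<and> conjugate m c (i + 1) \<le> conjugate m d (i + 1))"
  shows "e = c f"
proof -
  let ?L = "{i \<in> {1..m}. c i \<noteq> d i}"
  have Lfin: "finite ?L" by simp
  have lL: "l \<in> ?L" using l_def Lfin neq Max_in[OF Lfin] by blast
  have lmax: "\<And>i. i \<in> ?L \<Longrightarrow> i \<le> l" using l_def Lfin by simp
  have l1: "1 \<le> l" "l \<le> m" "c l \<noteq> d l" using lL by auto
  have after: "\<And>i. l < i \<Longrightarrow> i \<le> m \<Longrightarrow> c i = d i"
  proof (rule ccontr)
    fix i assume "l < i" "i \<le> m" "c i \<noteq> d i"
    then have "i \<in> ?L" using l1 by simp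
    then show False using lmax \<open>l < i\<close> by fastforce
  qed
  let ?F = "{i \<in> {1..l}. enat (c i) < ext0 d (i - 1)}"
  have Ffin: "finite ?F" by simp
  have "1 \<in> ?F" using l1 by (simp add: ext0_def)
  then have fF: "f \<in> ?F" using f_def Ffin Max_in[OF Ffin] by blast
  have fmax: "\<And>i. i \<in> ?F \<Longrightarrow> i \<le> f" using f_def Ffin by simp
  have f1: "1 \<le> f" "f \<le> l" using fF by auto
  have cmon: "\<And>i j. 1 \<le> i \<Longrightarrow> i \<le> j \<Longrightarrow> j \<le> m \<Longrightarrow> c j \<le> c i"
    using mono_seq[where m=m and a=c] c_mono by blast
  have dmon: "\<And>i j. 1 \<le> i \<Longrightarrow> i \<le> j \<Longrightarrow> j \<le> m \<Longrightarrow> d j \<le> d i"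
    using mono_seq[where m=m and a=d] d_mono by blast
  have fprev: "f \<ge> 2 \<Longrightarrow> c f < d (f - 1)" using fF by (auto simp: ext0_def)
  have beyond: "\<And>i. f < i \<Longrightarrow> i \<le> l \<Longrightarrow> d (i - 1) \<le> c i"
  proof -
    fix i assume "f < i" "i \<le> l"
    have "i \<notin> ?F"
    proof
      assume "i \<in> ?F" then have "i \<le> f" by (rule fmax)
      with \<open>f < i\<close> show False by simp
    qed
    then show "d (i - 1) \<le> c i" using \<open>f < i\<close> \<open>i \<le> l\<close> f1 by (auto simp: ext0_def)
  qed
  have key: "\<And>j k. 1 \<le> j \<Longrightarrow> j \<le> l \<Longrightarrow> k \<le> c f \<Longrightarrow> (\<And>i. 1 \<le> i \<Longrightarrow> i < j \<Longrightarrow> k \<le> d i) \<Longrightarrow> k \<le> c j"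
  proof -
    fix j k assume j: "1 \<le> j" "j \<le> l" "k \<le> c f" and h: "\<And>i. 1 \<le> i \<Longrightarrow> i < j \<Longrightarrow> k \<le> d i"
    show "k \<le> c j"
    proof (cases "j \<le> f")
      case True then show ?thesis using cmon[of j f] j l1 f1 by linarith
    next
      case False
      then have "d (j - 1) \<le> c j" using beyond j by simp
      moreover have "k \<le> d (j - 1)" using h[of "j - 1"] False f1 by simp
      ultimately show ?thesis by simp
    qed
  qed
  have "\<exists>k \<le> c f + 1. conjugate m c k \<noteq> conjugate m d k"
  proof (cases "c l < d l")
    case True
    have "conjugate m c (c l + 1) \<le> l - 1" using cardB[where a=c and m=m, OF c_mono] l1 by simp
    moreover have "l \<le> conjugate m d (c l + 1)"
    proof (rule cardA)
      show "l \<le> m" using l1 by simp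
      fix i assume "1 \<le> i" "i \<le> l"
      then have "d l \<le> d i" using dmon l1 by simp
      then show "c l + 1 \<le> d i" using True by simp
    qed
    moreover have "c l \<le> c f" using cmon f1 l1 by simp
    ultimately show ?thesis using l1 by (intro exI[of _ "c l + 1"]) auto
  next
    case False
    then have F: "d l < c l" using l1 by simp
    have "conjugate m d (d l + 1) \<le> l - 1" using cardB[where a=d and m=m, OF d_mono] l1 by simp
    moreover have "l \<le> conjugate m c (d l + 1)"
    proof (rule cardA)
      show "l \<le> m" using l1 by simp
      fix i assume "1 \<le> i" "i \<le> l"
      then have "c l \<le> c i" using cmon l1 by simp
      then show "d l + 1 \<le> c i" using F by simp
    qed
    moreover have "c l \<le> c f" using cmon f1 l1 by simp
    ultimately show ?thesis using l1 F by (intro exI[of _ "d l + 1"]) auto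
  qed
  then obtain k0 where k0: "k0 \<le> c f + 1" "conjugate m c k0 \<noteq> conjugate m d k0" by blast
  have xle: "x \<le> c f + 1" using Least_le[of "\<lambda>i. conjugate m c i \<noteq> conjugate m d i" k0] k0 x_def by simp
  have xneq: "conjugate m c x \<noteq> conjugate m d x" using LeastI[of "\<lambda>i. conjugate m c i \<noteq> conjugate m d i" k0] k0 x_def by simp
  have b: "conjugate m c (c f + 1) \<le> conjugate m d (c f + 1)"
  proof -
    have "conjugate m c (c f + 1) \<le> f - 1" using cardB[where a=c and m=m, OF c_mono, of f] f1 l1 by simp
    moreover have "f - 1 \<le> conjugate m d (c f + 1)"
    proof (cases "f \<ge> 2")
      case True
      then have "c f < d (f - 1)" using fprev by simp
      show ?thesis
      proof (rule cardA)
        show "f - 1 \<le> m" using f1 l1 by simp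
        fix i assume "1 \<le> i" "i \<le> f - 1"
        then have "d (f - 1) \<le> d i" using dmon f1 l1 by simp
        then show "c f + 1 \<le> d i" using \<open>c f < d (f - 1)\<close> by simp
      qed
    next
      case False then show ?thesis by simp
    qed
    ultimately show ?thesis by simp
  qed
  have c: "\<And>k. x \<le> k \<Longrightarrow> k \<le> c f \<Longrightarrow> conjugate m d k < conjugate m c k"
  proof -
    fix k assume k: "x \<le> k" "k \<le> c f"
    show "conjugate m d k < conjugate m c k"
    proof (cases "\<exists>j. 1 \<le> j \<and> j \<le> l \<and> d j < k")
      case True
      define j0 where "j0 = (LEAST j. 1 \<le> j \<and> j \<le> l \<and> d j < k)"
      have j0: "1 \<le> j0" "j0 \<le> l" "d j0 < k" using LeastI_ex[OF True] j0_def by auto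
      have below: "\<And>i. 1 \<le> i \<Longrightarrow> i < j0 \<Longrightarrow> k \<le> d i"
      proof -
        fix i assume "1 \<le> i" "i < j0"
        then have "\<not> (1 \<le> i \<and> i \<le> l \<and> d i < k)" using not_less_Least j0_def by blast
        then show "k \<le> d i" using \<open>1 \<le> i\<close> \<open>i < j0\<close> j0 by simp
      qed
      have "j0 \<le> conjugate m c k"
      proof (rule cardA)
        show "j0 \<le> m" using j0 l1 by simp
        fix i assume "1 \<le> i" "i \<le> j0"
        then show "k \<le> c i" using key[of i k] below j0 k by simp
      qed
      moreover have "conjugate m d k \<le> j0 - 1" using cardB[where a=d and m=m, OF d_mono] j0 l1 by simp
      ultimately show ?thesis using j0 by simp
    next
      case False
      then have dk: "\<And>j. 1 \<le> j \<Longrightarrow> j \<le> l \<Longrightarrow> k \<le> d j" by force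
      have ck: "\<And>j. 1 \<le> j \<Longrightarrow> j \<le> l \<Longrightarrow> k \<le> c j"
        using key dk k by (meson less_imp_le_nat order_trans)
      have "{i \<in> {1..m}. x \<le> c i} = {i \<in> {1..m}. x \<le> d i}"
      proof (intro Collect_cong conj_cong refl)
        fix i assume "i \<in> {1..m}"
        then show "(x \<le> c i) = (x \<le> d i)"
          using ck[of i] dk[of i] after[of i] k(1) by (cases "i \<le> l") auto
      qed
      then have "conjugate m c x = conjugate m d x" by (simp add: conjugate_def)
      then show ?thesis using xneq by simp
    qed
  qed
  show "e = c f" unfolding e_def
  proof (rule Least_equality)
    show "x - 1 \<le> c f \<and> conjugate m c (c f + 1) \<le> conjugate m d (c f + 1)" using xle b by simp
  next
    fix y assume y: "x - 1 \<le> y \<and> conjugate m c (y + 1) \<le> conjugate m d (y + 1)"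
    show "c f \<le> y"
    proof (rule ccontr)
      assume "\<not> c f \<le> y"
      moreover have "x \<le> y + 1" using y by linarith
      ultimately have "conjugate m d (y+1) < conjugate m c (y+1)" using c[of "y+1"] by simp
      then show False using y by simp
    qed
  qed
qed

theorem lemma4p6:
  fixes m :: nat and c d :: "nat \<Rightarrow> nat" and l f f' x e e' :: nat
  assumes c_mono: "\<And>i. 1 \<le> i \<Longrightarrow> i < m \<Longrightarrow> c (Suc i) \<le> c i"
    and d_mono: "\<And>i. 1 \<le> i \<Longrightarrow> i < m \<Longrightarrow> d (Suc i) \<le> d i"
    and neq: "\<exists>i \<in> {1..m}. c i \<noteq> d i"
    and l_def: "l = Max {i \<in> {1..m}. c i \<noteq> d i}"
    and f_def: "f = Max {i \<in> {1..l}. enat (c i) < ext0 d (i - 1)}"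
    and f'_def: "f' = Max {i \<in> {1..l}. enat (d i) < ext0 c (i - 1)}"
    and x_def: "x = (LEAST i. conjugate m c i \<noteq> conjugate m d i)"
    and e_def: "e = (LEAST i. x - 1 \<le> i \<and> conjugate m c (i + 1) \<le> conjugate m d (i + 1))"
    and e'_def: "e' = (LEAST i. x - 1 \<le> i \<and> conjugate m d (i + 1) \<le> conjugate m c (i + 1))"
  shows "e = c f \<and> e' = d f'"
proof
  show "e = c f" using half[where m=m and c=c and d=d and l=l and f=f and x=x and e=e] assms by blast
next
  have neq': "\<exists>i \<in> {1..m}. d i \<noteq> c i" 
  proof -
    obtain i where "i \<in> {1..m}" "c i \<noteq> d i" using neq by blast
    then show ?thesis by (intro bexI[of _ i]) auto
  qed
  have "{i \<in> {1..m}. d i \<noteq> c i} = {i \<in> {1..m}. c i \<noteq> d i}" by auto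
  then have l': "l = Max {i \<in> {1..m}. d i \<noteq> c i}" using l_def by simp
  have "(\<lambda>i. conjugate m d i \<noteq> conjugate m c i) = (\<lambda>i. conjugate m c i \<noteq> conjugate m d i)" by auto
  then have x': "x = (LEAST i. conjugate m d i \<noteq> conjugate m c i)" using x_def by simp
  show "e' = d f'" using half[where m=m and c=d and d=c and l=l and f=f' and x=x and e=e'] d_mono c_mono neq' l' f'_def x' e'_def by blast
qed

end
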